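(* Let $\mathcal{X}$ be an input space, $\mathcal{Y}=\{-1,1\}$, $\mathcal{D}$ a distribution on $\mathcal{X}\times\mathcal{Y}$ with marginal $\mathcal{P}_{\mathcal{X}}$, and $(x,y)\sim\mathcal{D}$ with $y$ the ground-truth label. Let $\mathcal{F},\mathcal{G}:\mathcal{X}\to\mathcal{Y}$ be classifiers, $\delta,\rho,\epsilon\in(0,1)$ constants, and $\mathcal{A}:\mathcal{X}\to\mathcal{X}$ an attack strategy. Suppose $\mathcal{A}$ is $\rho$-conservative and $\mathcal{F},\mathcal{G}$ have risk at most $\epsilon$. If $\mathcal{A}$ is $(\delta,\mathcal{F})$-effective, then it is also $(\delta+4\epsilon+\rho,\mathcal{G})$-effective.
   Context: Risk of $\mathcal{F}$: $\Pr(\mathcal{F}(x)\neq y)$. Let $\mathcal{P}_{\mathcal{A}(x)}$ denote the distribution of $\mathcal{A}(x)$ for $x\sim\mathcal{P}_{\mathcal{X}}$; $\mathcal{A}$ is $\rho$-conservative if $\sup_{C\subseteq\mathcal{X}}|\mathcal{P}_{\mathcal{X}}(C)-\mathcal{P}_{\mathcal{A}(x)}(C)|\le\rho$. The attack is $(\alpha,\mathcal{F})$-effective (untargeted) if $\Pr(\mathcal{F}(\mathcal{A}(x))\neq y)\ge 1-\alpha$. *)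

theory Defs
  imports "HOL-Probability.Probability"
begin

text \<open>D is a distribution on X \<times> Y (pairs (x,y)), MX the measurable space on X.
  Labels are integers; Y = {-1,1} is imposed by assumptions.\<close>

definition risk :: "('a \<times> int) measure \<Rightarrow> ('a \<Rightarrow> int) \<Rightarrow> real" where
  "risk D F = measure D {p \<in> space D. F (fst p) \<noteq> snd p}"

definition conservative ::
  "'a measure \<Rightarrow> ('a \<times> int) measure \<Rightarrow> ('a \<Rightarrow> 'a) \<Rightarrow> real \<Rightarrow> bool" where
  "conservative MX D A \<rho> \<longleftrightarrow>
     (\<forall>C \<in> sets MX. \<bar>measure (distr D MX fst) C - measure (distr D MX (\<lambda>p. A (fst p))) C\<bar> \<le> \<rho>)"

definition effective ::
  "('a \<times> int) measure \<Rightarrow> ('a \<Rightarrow> 'a) \<Rightarrow> real \<Rightarrow> ('a \<Rightarrow> int) \<Rightarrow> bool" where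
  "effective D A \<alpha> F \<longleftrightarrow> measure D {p \<in> space D. F (A (fst p)) \<noteq> snd p} \<ge> 1 - \<alpha>"

end

theory Submission
  imports Defs
begin

theorem theorem5:
  fixes MX :: "'a measure" and D :: "('a \<times> int) measure"
    and F G :: "'a \<Rightarrow> int" and A :: "'a \<Rightarrow> 'a" and \<delta> \<rho> \<epsilon> :: real
  assumes "prob_space D"
    and "sets D = sets (MX \<Otimes>\<^sub>M count_space UNIV)"
    and "AE p in D. snd p \<in> {-1, 1}"
    and "F \<in> MX \<rightarrow>\<^sub>M count_space UNIV" and "G \<in> MX \<rightarrow>\<^sub>M count_space UNIV"
    and "\<forall>x \<in> space MX. F x \<in> {-1, 1}" and "\<forall>x \<in> space MX. G x \<in> {-1, 1}"
    and "A \<in> MX \<rightarrow>\<^sub>M MX"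
    and "\<delta> \<in> {0<..<1}" and "\<rho> \<in> {0<..<1}" and "\<epsilon> \<in> {0<..<1}"
    and "conservative MX D A \<rho>"
    and "risk D F \<le> \<epsilon>" and "risk D G \<le> \<epsilon>"
    and "effective D A \<delta> F"
  shows "effective D A (\<delta> + 4 * \<epsilon> + \<rho>) G"
proof -
  interpret P: prob_space D by fact
  have fstm: "fst \<in> D \<rightarrow>\<^sub>M MX"
    using measurable_cong_sets[OF assms(2) refl] measurable_fst by blast
  have sndm: "snd \<in> D \<rightarrow>\<^sub>M count_space UNIV"
    using measurable_cong_sets[OF assms(2) refl] measurable_snd by blast
  have Am: "(\<lambda>p. A (fst p)) \<in> D \<rightarrow>\<^sub>M MX"
    using fstm assms(8) by measurable
  have Fm: "(\<lambda>p. F (fst p)) \<in> D \<rightarrow>\<^sub>M count_space UNIV" using fstm assms(4) by measurable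
  have Gm: "(\<lambda>p. G (fst p)) \<in> D \<rightarrow>\<^sub>M count_space UNIV" using fstm assms(5) by measurable
  have FAm: "(\<lambda>p. F (A (fst p))) \<in> D \<rightarrow>\<^sub>M count_space UNIV" using Am assms(4) by measurable
  have GAm: "(\<lambda>p. G (A (fst p))) \<in> D \<rightarrow>\<^sub>M count_space UNIV" using Am assms(5) by measurable
  have ev: "{p \<in> space D. f p \<noteq> g p} \<in> sets D"
    if "f \<in> D \<rightarrow>\<^sub>M count_space UNIV" "g \<in> D \<rightarrow>\<^sub>M count_space UNIV" for f g :: "_ \<Rightarrow> int"
    using that by measurable
  define C where "C = {x \<in> space MX. F x \<noteq> G x}"
  have C: "C \<in> sets MX" unfolding C_def using assms(4,5) by measurable
  have c1: "measure (distr D MX fst) C = measure D {p \<in> space D. F (fst p) \<noteq> G (fst p)}"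
    using fstm C by (simp add: measure_distr C_def vimage_def Int_def) (metis (lifting) measurable_space)
  have c2: "measure (distr D MX (\<lambda>p. A (fst p))) C = measure D {p \<in> space D. F (A (fst p)) \<noteq> G (A (fst p))}"
    using Am C by (simp add: measure_distr C_def vimage_def Int_def) (metis (lifting) measurable_space)
  have cons: "measure (distr D MX (\<lambda>p. A (fst p))) C \<le> measure (distr D MX fst) C + \<rho>"
    using assms(12) C unfolding conservative_def by force
  have "measure D {p \<in> space D. F (fst p) \<noteq> G (fst p)}
      \<le> measure D ({p \<in> space D. F (fst p) \<noteq> snd p} \<union> {p \<in> space D. G (fst p) \<noteq> snd p})"
    by (rule P.finite_measure_mono) (auto intro!: ev Fm Gm sndm)
  also have "\<dots> \<le> risk D F + risk D G" unfolding risk_def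
    by (rule measure_Un_le) (auto intro!: ev Fm Gm sndm)
  finally have d1: "measure D {p \<in> space D. F (fst p) \<noteq> G (fst p)} \<le> 2 * \<epsilon>" using assms(13,14) by simp
  have "measure D {p \<in> space D. F (A (fst p)) \<noteq> snd p}
      \<le> measure D ({p \<in> space D. G (A (fst p)) \<noteq> snd p} \<union> {p \<in> space D. F (A (fst p)) \<noteq> G (A (fst p))})"
    by (rule P.finite_measure_mono) (auto intro!: ev FAm GAm sndm)
  also have "\<dots> \<le> measure D {p \<in> space D. G (A (fst p)) \<noteq> snd p} + measure D {p \<in> space D. F (A (fst p)) \<noteq> G (A (fst p))}"
    by (rule measure_Un_le) (auto intro!: ev FAm GAm sndm)
  finally have d2: "measure D {p \<in> space D. F (A (fst p)) \<noteq> snd p}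
      \<le> measure D {p \<in> space D. G (A (fst p)) \<noteq> snd p} + measure D {p \<in> space D. F (A (fst p)) \<noteq> G (A (fst p))}" .
  have e0: "\<epsilon> > 0" using assms(11) by simp
  show ?thesis
    using assms(15) d1 d2 c1 c2 cons e0 unfolding effective_def by linarith
qed

end
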